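(* For the three calculi on $\mathbb F_2[e,x]$ given by the algebras (A) $x\circ x=0$, (B) $x\circ x=x$, (C) $x\circ x=e+x$ (basis $e,x$, $e$ the unit), the quantum metrics are exactly: (A) $g_{A.I}=\mathrm de\otimes\mathrm dx+\mathrm dx\otimes\mathrm de$ and $g_{A.II}=\mathrm de\otimes\mathrm dx+\mathrm dx\otimes\mathrm de+\mathrm dx\otimes\mathrm dx$; (B) $g_B=\mathrm de\otimes\mathrm de+\mathrm de\otimes\mathrm dx+\mathrm dx\otimes\mathrm de$; (C) $g_{C.I}=\mathrm de\otimes\mathrm dx+\mathrm dx\otimes\mathrm de+\mathrm dx\otimes\mathrm dx$, $g_{C.II}=\mathrm de\otimes\mathrm de+\mathrm de\otimes\mathrm dx+\mathrm dx\otimes\mathrm de$, $g_{C.III}=\mathrm de\otimes\mathrm de+\mathrm dx\otimes\mathrm dx$. Moreover, the quantum Levi-Civita connections with constant coefficients, besides the zero connection $\nabla\mathrm de=\nabla\mathrm dx=0$ (with $\sigma$ the flip on generators), are exactly: for $g_{A.I}$: (1) $\nabla\mathrm de=\mathrm dx\otimes\mathrm dx,\ \nabla\mathrm dx=0$; (2) $\nabla\mathrm de=\mathrm dx\otimes\mathrm de+\mathrm de\otimes\mathrm dx,\ \nabla\mathrm dx=\mathrm dx\otimes\mathrm dx$; (3) $\nabla\mathrm de=\mathrm dx\otimes\mathrm de+\mathrm de\otimes\mathrm dx+\mathrm dx\otimes\mathrm dx,\ \nabla\mathrm dx=\mathrm dx\otimes\mathrm dx$; (4) $\nabla\mathrm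 de=0,\ \nabla\mathrm dx=\mathrm de\otimes\mathrm de$; (5) $\nabla\mathrm de=\mathrm de\otimes\mathrm dx+\mathrm dx\otimes\mathrm de,\ \nabla\mathrm dx=\mathrm de\otimes\mathrm de+\mathrm dx\otimes\mathrm dx$; for $g_{A.II}$: the connections (1), (2), (3) above; for $g_B$: $\nabla\mathrm de=0,\ \nabla\mathrm dx=\mathrm de\otimes\mathrm de$; for $g_{C.I}$: $\nabla\mathrm de=\mathrm de\otimes\mathrm dx+\mathrm dx\otimes\mathrm de+\mathrm dx\otimes\mathrm dx,\ \nabla\mathrm dx=\mathrm dx\otimes\mathrm dx$; for $g_{C.II}$: $\nabla\mathrm de=0,\ \nabla\mathrm dx=\mathrm de\otimes\mathrm de$; for $g_{C.III}$: $\nabla\mathrm de=\mathrm de\otimes\mathrm de+\mathrm dx\otimes\mathrm dx,\ \nabla\mathrm dx=\mathrm de\otimes\mathrm dx+\mathrm dx\otimes\mathrm de$. In all cases the map $\alpha$ in the decomposition $\nabla\omega=\theta\otimes\omega-\sigma(\omega\otimes\theta)+\alpha\omega$, $\theta=\mathrm de$, is zero.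
   Context: Standing setup. Work over $\mathbb F_2$. Let $(V,\circ)$ be a commutative associative algebra over $\mathbb F_2$ with basis $x^1,\dots,x^n$ and structure constants $x^\mu\circ x^\nu=\sum_\rho V^{\mu\nu}{}_\rho x^\rho$. Let $A=\mathbb F_2[x^1,\dots,x^n]$ be the polynomial algebra on the same symbols. The associated differential calculus is the $A$-bimodule $\Omega^1$ which is free as a left $A$-module on $\mathrm dx^1,\dots,\mathrm dx^n$, with right action determined by $\mathrm dx^\mu\, x^\nu=x^\nu\,\mathrm dx^\mu+\sum_\rho V^{\mu\nu}{}_\rho\,\mathrm dx^\rho$, together with the unique map $\mathrm d:A\to\Omega^1$ satisfying the Leibniz rule $\mathrm d(ab)=(\mathrm da)b+a\,\mathrm db$, $\mathrm d(x^\mu)=\mathrm dx^\mu$, $\mathrm d1=0$. The bimodule $\Omega^1\otimes_A\Omega^1$ is free as a left module on $\mathrm dx^\mu\otimes\mathrm dx^\nu$. $\Omega^2$ is the quotient of $\Omega^1\otimes_A\Omega^1$ by the sub-bimodule generated by $\mathrm dx^\mu\otimes\mathrm dx^\mu$ and $\mathrm dx^\mu\otimes\mathrm dx^\nu+\mathrm dx^\nu\otimes \mathrm dx^\mu$; the quotient map is denoted $\wedge$, and $\mathrm d$ is extended to $\Omega^1$ by $\mathrm d(a\,\mathrm dx^\mu)=\mathrm da\wedge\mathrm dx^\mu$. A quantum metric is $g=\sum_{\mu,\nu}g_{\mu\nu}\mathrm dx^\mu\otimes\mathrm dx^\nu$ with constants $g_{\mu\nu}\in\mathbb F_2$, $g_{\mu\nu}=g_{\nu\mu}$,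 the matrix $(g_{\mu\nu})$ invertible, and $g$ central: $x^\rho g=g x^\rho$ for all $\rho$. A bimodule connection is a pair $(\nabla,\sigma)$ with $\nabla:\Omega^1\to\Omega^1\otimes_A\Omega^1$ additive, $\nabla(a\omega)=a\nabla\omega+\mathrm da\otimes\omega$, and $\sigma:\Omega^1\otimes_A\Omega^1\to\Omega^1\otimes_A\Omega^1$ a bimodule map with $\nabla(\omega a)=(\nabla\omega)a+\sigma(\omega\otimes\mathrm da)$. It has constant coefficients if $\nabla\mathrm dx^\mu=\sum\Gamma^\mu{}_{\nu\rho}\mathrm dx^\nu\otimes\mathrm dx^\rho$ with $\Gamma^\mu{}_{\nu\rho}\in\mathbb F_2$. A quantum Levi-Civita connection (QLC) for $g$ is a bimodule connection with $\sigma$ invertible, torsion free ($\wedge\nabla=\mathrm d$ on $\Omega^1$) and metric compatible ($(\nabla\otimes\mathrm{id})g+(\sigma\otimes\mathrm{id})(\mathrm{id}\otimes\nabla)g=0$). Its curvature is $R_\nabla=(\mathrm d\otimes\mathrm{id}-(\wedge\otimes\mathrm{id})(\mathrm{id}\otimes\nabla))\nabla:\Omega^1\to\Omega^2\otimes_A\Omega^1$. Here the basis is $x^1=e$, $x^2=x$. *)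

theory Defs
  imports Main "HOL-Library.Poly_Mapping" "HOL-Library.Z2"
begin

section \<open>Index set: the basis x^1 = e, x^2 = x of V\<close>

datatype idx = E | X

lemma UNIV_idx: "(UNIV :: idx set) = {E, X}"
  using idx.exhaust by auto

instance idx :: finite
  by standard (simp add: UNIV_idx)

text \<open>A monomial is a finitely supported
  exponent vector (finitely supported idx to nat); a polynomial is a finitely supported map from
  monomials to F_2 (the standard multivariate polynomial ring).\<close>

type_synonym poly2 = "(idx \<Rightarrow>\<^sub>0 nat) \<Rightarrow>\<^sub>0 bit"

definition Var :: "idx \<Rightarrow> poly2" where
  "Var i = Poly_Mapping.single (Poly_Mapping.single i 1) 1"

definition Const :: "bit \<Rightarrow> poly2" where
  "Const c = Poly_Mapping.single 0 c"

text \<open>Structure constants V mu nu rho: x^mu o x^nu = sum_rho V mu nu rho x^rho.\<close>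
type_synonym structc = "idx \<Rightarrow> idx \<Rightarrow> idx \<Rightarrow> bit"

text \<open>Elements of Omega^1 (free left module on dx^mu), of Omega^1 (x)_A Omega^1
  (free left module on dx^mu (x) dx^nu) and of the triple tensor product, given by
  their left coefficients.\<close>
type_synonym om1 = "idx \<Rightarrow> poly2"
type_synonym om2 = "idx \<Rightarrow> idx \<Rightarrow> poly2"
type_synonym om3 = "idx \<Rightarrow> idx \<Rightarrow> idx \<Rightarrow> poly2"

definition dxb :: "idx \<Rightarrow> om1" where
  "dxb mu = (\<lambda>a. if a = mu then 1 else 0)"

definition basis2 :: "idx \<Rightarrow> idx \<Rightarrow> om2" where
  "basis2 mu nu = (\<lambda>a b. if a = mu \<and> b = nu then 1 else 0)"

definition zero2 :: om2 where "zero2 = (\<lambda>a b. 0)"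

definition add1 :: "om1 \<Rightarrow> om1 \<Rightarrow> om1" where "add1 w u = (\<lambda>a. w a + u a)"
definition add2 :: "om2 \<Rightarrow> om2 \<Rightarrow> om2" where "add2 S T = (\<lambda>a b. S a b + T a b)"
definition sub2 :: "om2 \<Rightarrow> om2 \<Rightarrow> om2" where "sub2 S T = (\<lambda>a b. S a b - T a b)"
definition add3 :: "om3 \<Rightarrow> om3 \<Rightarrow> om3" where "add3 S T = (\<lambda>a b c. S a b c + T a b c)"

definition smul1 :: "poly2 \<Rightarrow> om1 \<Rightarrow> om1" where "smul1 p w = (\<lambda>a. p * w a)"
definition smul2 :: "poly2 \<Rightarrow> om2 \<Rightarrow> om2" where "smul2 p T = (\<lambda>a b. p * T a b)"

text \<open>Right action of a generator on Omega^1: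
  (sum_mu w_mu dx^mu) x^nu = sum_mu w_mu (x^nu dx^mu + sum_rho V^{mu nu}_rho dx^rho).\<close>
definition rgen1 :: "structc \<Rightarrow> idx \<Rightarrow> om1 \<Rightarrow> om1" where
  "rgen1 V nu w = (\<lambda>rho. Var nu * w rho + (\<Sum>mu\<in>UNIV. w mu * Const (V mu nu rho)))"

text \<open>Right action of an arbitrary polynomial: a monomial acts as the corresponding
  composite of generator actions, extended additively (constants of F_2 are central).\<close>
definition rmul1 :: "structc \<Rightarrow> poly2 \<Rightarrow> om1 \<Rightarrow> om1" where
  "rmul1 V p w = (\<lambda>rho. \<Sum>m :: idx \<Rightarrow>\<^sub>0 nat\<in>Poly_Mapping.keys p.
      Const (Poly_Mapping.lookup p m) * (((rgen1 V E ^^ Poly_Mapping.lookup m E) ((rgen1 V X ^^ Poly_Mapping.lookup m X) w)) rho))"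

text \<open>Tensor product over A of two 1-forms:
  w (x) (sum_b u_b dx^b) = sum_b (w u_b) (x) dx^b.\<close>
definition tens :: "structc \<Rightarrow> om1 \<Rightarrow> om1 \<Rightarrow> om2" where
  "tens V w u = (\<lambda>a b. rmul1 V (u b) w a)"

text \<open>Right action on Omega^1 (x)_A Omega^1:
  (sum_k T_{.k} (x) dx^k) p = sum_k T_{.k} (x) (dx^k p).\<close>
definition rmul2 :: "structc \<Rightarrow> poly2 \<Rightarrow> om2 \<Rightarrow> om2" where
  "rmul2 V p T = (\<lambda>a b. \<Sum>k\<in>UNIV. tens V (\<lambda>m. T m k) (rmul1 V p (dxb k)) a b)"

definition tens21 :: "structc \<Rightarrow> om2 \<Rightarrow> om1 \<Rightarrow> om3" where
  "tens21 V T u = (\<lambda>a b c. rmul2 V (u c) T a b)"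

definition tens12 :: "structc \<Rightarrow> om1 \<Rightarrow> om2 \<Rightarrow> om3" where
  "tens12 V w T = (\<lambda>a b c. rmul1 V (T b c) w a)"

definition is_d :: "structc \<Rightarrow> (poly2 \<Rightarrow> om1) \<Rightarrow> bool" where
  "is_d V D \<longleftrightarrow> (\<forall>p q. D (p + q) = add1 (D p) (D q))
     \<and> (\<forall>p q. D (p * q) = add1 (rmul1 V q (D p)) (smul1 p (D q)))
     \<and> (\<forall>mu. D (Var mu) = dxb mu) \<and> D 1 = (\<lambda>a. 0)"

definition dd :: "structc \<Rightarrow> poly2 \<Rightarrow> om1" where
  "dd V = (THE D. is_d V D)"

text \<open>d on Omega^1: d(sum_mu w_mu dx^mu) = sum_mu d w_mu \<and> dx^mu, represented
  in Omega^1 (x)_A Omega^1 before taking the quotient.\<close>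
definition dd1 :: "structc \<Rightarrow> om1 \<Rightarrow> om2" where
  "dd1 V w = (\<lambda>a b. \<Sum>mu\<in>UNIV. tens V (dd V (w mu)) (dxb mu) a b)"

text \<open>The sub-bimodule of Omega^1 (x)_A Omega^1 generated by dx^mu (x) dx^mu and
  dx^mu (x) dx^nu + dx^nu (x) dx^mu; \<and> is the quotient map by it.\<close>
inductive_set wedge_ker :: "structc \<Rightarrow> om2 set" for V where
  wk_zero: "zero2 \<in> wedge_ker V"
| wk_diag: "basis2 mu mu \<in> wedge_ker V"
| wk_sym: "add2 (basis2 mu nu) (basis2 nu mu) \<in> wedge_ker V"
| wk_add: "S \<in> wedge_ker V \<Longrightarrow> T \<in> wedge_ker V \<Longrightarrow> add2 S T \<in> wedge_ker V"
| wk_lmul: "T \<in> wedge_ker V \<Longrightarrow> smul2 p T \<in> wedge_ker V"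
| wk_rmul: "T \<in> wedge_ker V \<Longrightarrow> rmul2 V p T \<in> wedge_ker V"

definition metric_tensor :: "(idx \<Rightarrow> idx \<Rightarrow> bit) \<Rightarrow> om2" where
  "metric_tensor g = (\<lambda>a b. Const (g a b))"

definition invertible2 :: "(idx \<Rightarrow> idx \<Rightarrow> bit) \<Rightarrow> bool" where
  "invertible2 g \<longleftrightarrow> (\<exists>h. (\<forall>i j. (\<Sum>k\<in>UNIV. g i k * h k j) = (if i = j then 1 else 0))
                          \<and> (\<forall>i j. (\<Sum>k\<in>UNIV. h i k * g k j) = (if i = j then 1 else 0)))"

definition quantum_metric :: "structc \<Rightarrow> (idx \<Rightarrow> idx \<Rightarrow> bit) \<Rightarrow> bool" where
  "quantum_metric V g \<longleftrightarrow> (\<forall>i j. g i j = g j i) \<and> invertible2 g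
     \<and> (\<forall>rho. smul2 (Var rho) (metric_tensor g) = rmul2 V (Var rho) (metric_tensor g))"

definition bimodule_map2 :: "structc \<Rightarrow> (om2 \<Rightarrow> om2) \<Rightarrow> bool" where
  "bimodule_map2 V s \<longleftrightarrow> (\<forall>S T. s (add2 S T) = add2 (s S) (s T))
     \<and> (\<forall>p T. s (smul2 p T) = smul2 p (s T))
     \<and> (\<forall>p T. s (rmul2 V p T) = rmul2 V p (s T))"

definition bimod_conn :: "structc \<Rightarrow> (om1 \<Rightarrow> om2) \<Rightarrow> (om2 \<Rightarrow> om2) \<Rightarrow> bool" where
  "bimod_conn V nab s \<longleftrightarrow> (\<forall>w u. nab (add1 w u) = add2 (nab w) (nab u))
     \<and> (\<forall>p w. nab (smul1 p w) = add2 (smul2 p (nab w)) (tens V (dd V p) w))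
     \<and> bimodule_map2 V s
     \<and> (\<forall>w p. nab (rmul1 V p w) = add2 (rmul2 V p (nab w)) (s (tens V w (dd V p))))"

definition const_coeff :: "(om1 \<Rightarrow> om2) \<Rightarrow> bool" where
  "const_coeff nab \<longleftrightarrow> (\<forall>mu. \<exists>G :: idx \<Rightarrow> idx \<Rightarrow> bit. nab (dxb mu) = (\<lambda>a b. Const (G a b)))"

definition torsion_free :: "structc \<Rightarrow> (om1 \<Rightarrow> om2) \<Rightarrow> bool" where
  "torsion_free V nab \<longleftrightarrow> (\<forall>w. sub2 (nab w) (dd1 V w) \<in> wedge_ker V)"

text \<open>(sigma (x) id) applied to Phi = sum_c Phi_{..c} (x) dx^c.\<close>
definition sigma_id :: "structc \<Rightarrow> (om2 \<Rightarrow> om2) \<Rightarrow> om3 \<Rightarrow> om3" where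
  "sigma_id V s Phi = (\<lambda>a b c. \<Sum>k\<in>UNIV. tens21 V (s (\<lambda>i j. Phi i j k)) (dxb k) a b c)"

text \<open>(nabla (x) id) g + (sigma (x) id)(id (x) nabla) g = 0 for
  g = sum g_{mu nu} dx^mu (x) dx^nu.\<close>
definition metric_compat :: "structc \<Rightarrow> (idx \<Rightarrow> idx \<Rightarrow> bit) \<Rightarrow> (om1 \<Rightarrow> om2) \<Rightarrow> (om2 \<Rightarrow> om2) \<Rightarrow> bool" where
  "metric_compat V g nab s \<longleftrightarrow>
     (\<lambda>a b c. (\<Sum>mu\<in>UNIV. \<Sum>nu\<in>UNIV.
         tens21 V (nab (smul1 (Const (g mu nu)) (dxb mu))) (dxb nu) a b c)
       + sigma_id V s (\<lambda>i j k. \<Sum>mu\<in>UNIV. \<Sum>nu\<in>UNIV.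
         tens12 V (smul1 (Const (g mu nu)) (dxb mu)) (nab (dxb nu)) i j k) a b c)
     = (\<lambda>a b c. 0)"

definition QLC :: "structc \<Rightarrow> (idx \<Rightarrow> idx \<Rightarrow> bit) \<Rightarrow> (om1 \<Rightarrow> om2) \<Rightarrow> (om2 \<Rightarrow> om2) \<Rightarrow> bool" where
  "QLC V g nab s \<longleftrightarrow> bimod_conn V nab s \<and> bij s \<and> torsion_free V nab \<and> metric_compat V g nab s"

text \<open>e o e = e, e o x = x o e = x, and x o x = p e + q x.\<close>
definition Valg :: "bit \<Rightarrow> bit \<Rightarrow> structc" where
  "Valg p q mu nu rho =
     (if mu = E then (if rho = nu then 1 else 0)
      else if nu = E then (if rho = mu then 1 else 0)
      else (if rho = E then p else q))"

definition VA :: structc where "VA = Valg 0 0"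
definition VB :: structc where "VB = Valg 0 1"
definition VC :: structc where "VC = Valg 1 1"

definition mat2 :: "bit \<Rightarrow> bit \<Rightarrow> bit \<Rightarrow> bit \<Rightarrow> idx \<Rightarrow> idx \<Rightarrow> bit" where
  "mat2 ee ex xe xx i j = (case (i, j) of (E, E) \<Rightarrow> ee | (E, X) \<Rightarrow> ex | (X, E) \<Rightarrow> xe | (X, X) \<Rightarrow> xx)"

definition gAI   where "gAI   = mat2 0 1 1 0"
definition gAII  where "gAII  = mat2 0 1 1 1"
definition gB    where "gB    = mat2 1 1 1 0"
definition gCI   where "gCI   = mat2 0 1 1 1"
definition gCII  where "gCII  = mat2 1 1 1 0"
definition gCIII where "gCIII = mat2 1 0 0 1"

definition cten :: "bit \<Rightarrow> bit \<Rightarrow> bit \<Rightarrow> bit \<Rightarrow> om2" where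
  "cten ee ex xe xx = (\<lambda>a b. Const (mat2 ee ex xe xx a b))"

text \<open>Pairs (nabla de, nabla dx).\<close>
definition conn0 where "conn0 = (cten 0 0 0 0, cten 0 0 0 0)"
definition connA1 where "connA1 = (cten 0 0 0 1, cten 0 0 0 0)"
definition connA2 where "connA2 = (cten 0 1 1 0, cten 0 0 0 1)"
definition connA3 where "connA3 = (cten 0 1 1 1, cten 0 0 0 1)"
definition connA4 where "connA4 = (cten 0 0 0 0, cten 1 0 0 0)"
definition connA5 where "connA5 = (cten 0 1 1 0, cten 1 0 0 1)"
definition connB where "connB = (cten 0 0 0 0, cten 1 0 0 0)"
definition connCI where "connCI = (cten 0 1 1 1, cten 0 0 0 1)"
definition connCII where "connCII = (cten 0 0 0 0, cten 1 0 0 0)"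
definition connCIII where "connCIII = (cten 1 0 0 1, cten 0 1 1 0)"

text \<open>The cases: algebra, metric, list of QLCs with constant coefficients.\<close>
definition cases4 :: "(structc \<times> (idx \<Rightarrow> idx \<Rightarrow> bit) \<times> (om2 \<times> om2) set) set" where
  "cases4 = {(VA, gAI, {conn0, connA1, connA2, connA3, connA4, connA5}),
             (VA, gAII, {conn0, connA1, connA2, connA3}),
             (VB, gB, {conn0, connB}),
             (VC, gCI, {conn0, connCI}),
             (VC, gCII, {conn0, connCII}),
             (VC, gCIII, {conn0, connCIII})}"

end

theory Submission
  imports Defs
begin

declare add_bit_eq_xor[simp del] mult_bit_eq_and[simp del]

lemma sum_idx: "(\<Sum>i\<in>UNIV. f i) = f E + f X"
  by (simp add: UNIV_idx)
lemma all_idx: "(\<forall>i::idx. P i) \<longleftrightarrow> P E \<and> P X"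
  by (metis idx.exhaust)

lemma bit_add_self [simp]: "(a::bit) + a = 0" by (cases a) simp_all

lemma poly2_add_self [simp]: "(a::poly2) + a = 0"
proof (rule poly_mapping_eqI)
  fix k show "Poly_Mapping.lookup (a + a) k = Poly_Mapping.lookup 0 k"
    by (simp only: lookup_add bit_add_self lookup_zero)
qed
lemma poly2_add_self2 [simp]: "(a::poly2) + (a + b) = b"
  by (metis add.assoc add_0 poly2_add_self)
lemma poly2_uminus [simp]: "- (a::poly2) = a"
  by (metis add_eq_0_iff2 poly2_add_self)
lemma poly2_minus [simp]: "(a::poly2) - b = a + b"
  by simp
lemma poly2_two [simp]: "(2::poly2) = 0"
  by (metis one_add_one poly2_add_self)
lemma poly2_two_mult [simp]: "2 * (a::poly2) = 0" by simp

definition lin1 :: "(om1 \<Rightarrow> om1) \<Rightarrow> bool" where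
  "lin1 f \<longleftrightarrow> (\<forall>w u. f (add1 w u) = add1 (f w) (f u)) \<and> (\<forall>c w. f (smul1 c w) = smul1 c (f w))"

lemma lin1_rgen1: "lin1 (rgen1 V nu)"
  unfolding lin1_def rgen1_def add1_def smul1_def sum_idx
  by (auto simp: algebra_simps fun_eq_iff)

lemma lin1_comp: "lin1 f \<Longrightarrow> lin1 g \<Longrightarrow> lin1 (f \<circ> g)"
  by (simp add: lin1_def)
lemma lin1_id: "lin1 id" by (simp add: lin1_def)
lemma lin1_funpow: "lin1 f \<Longrightarrow> lin1 (f ^^ n)"
  by (induction n) (simp_all add: lin1_id lin1_comp)

lemma lin1_zero: "lin1 f \<Longrightarrow> f (\<lambda>_. 0) = (\<lambda>_. 0)"
proof -
  assume "lin1 f"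
  then have "f (smul1 0 (\<lambda>_. 0)) = smul1 0 (f (\<lambda>_. 0))" by (simp add: lin1_def)
  then show ?thesis by (simp add: smul1_def)
qed

lemma funpow_commute_app: "(\<And>x. f (g x) = g (f x)) \<Longrightarrow> (f ^^ n) (g x) = g ((f ^^ n) x)"
  by (induction n) simp_all

lemma funpow_commute2: "(\<And>x. f (g x) = g (f x)) \<Longrightarrow> (f ^^ n) ((g ^^ m) x) = (g ^^ m) ((f ^^ n) x)"
proof (induction m arbitrary: x)
  case 0 then show ?case by simp
next
  case (Suc m)
  have "(f ^^ n) ((g ^^ Suc m) x) = (f ^^ n) (g ((g ^^ m) x))" by (simp add: funpow_swap1)
  also have "\<dots> = g ((f ^^ n) ((g ^^ m) x))" by (rule funpow_commute_app) (rule Suc.prems)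
  also have "\<dots> = g ((g ^^ m) ((f ^^ n) x))" using Suc by simp
  finally show ?case by (simp add: funpow_swap1)
qed

lemma rgenE: "rgen1 (Valg p q) E w = add1 (smul1 (Var E) w) w"
  unfolding rgen1_def add1_def smul1_def sum_idx Valg_def Const_def
  by (auto simp: fun_eq_iff) (metis idx.exhaust)+

lemma rgen_commute: "rgen1 (Valg p q) E (rgen1 (Valg p q) X w) = rgen1 (Valg p q) X (rgen1 (Valg p q) E w)"
  using lin1_rgen1[of "Valg p q" X] by (simp add: rgenE lin1_def)

definition Rm :: "structc \<Rightarrow> (idx \<Rightarrow>\<^sub>0 nat) \<Rightarrow> om1 \<Rightarrow> om1" where
  "Rm V m w = (rgen1 V E ^^ Poly_Mapping.lookup m E) ((rgen1 V X ^^ Poly_Mapping.lookup m X) w)"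

lemma lin1_Rm: "lin1 (Rm V m)"
proof -
  have "Rm V m = (rgen1 V E ^^ Poly_Mapping.lookup m E) \<circ> (rgen1 V X ^^ Poly_Mapping.lookup m X)"
    by (simp add: Rm_def fun_eq_iff)
  then show ?thesis by (simp add: lin1_comp lin1_funpow lin1_rgen1)
qed

lemma Rm_add: "Rm (Valg p q) (m1 + m2) w = Rm (Valg p q) m1 (Rm (Valg p q) m2 w)"
proof -
  let ?E = "rgen1 (Valg p q) E" and ?X = "rgen1 (Valg p q) X"
  have c: "(?E ^^ a) ((?X ^^ b) x) = (?X ^^ b) ((?E ^^ a) x)" for a b x
    by (rule funpow_commute2) (rule rgen_commute)
  show ?thesis
    unfolding Rm_def lookup_add funpow_add comp_def
    by (simp add: c)
qed

lemma Rm_zero: "Rm V 0 w = w" by (simp add: Rm_def)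

lemma Const_0 [simp]: "Const 0 = 0" by (simp add: Const_def)
lemma Const_1 [simp]: "Const 1 = 1" by (simp add: Const_def)
lemma Const_add: "Const (a + b) = Const a + Const b" by (simp add: Const_def single_add)
lemma Const_mult: "Const (a * b) = Const a * Const b" by (simp add: Const_def mult_single)

lemma rmul1_alt:
  assumes "finite S" "Poly_Mapping.keys p \<subseteq> S"
  shows "rmul1 V p w = (\<lambda>r. \<Sum>m\<in>S. Const (Poly_Mapping.lookup p m) * Rm V m w r)"
  unfolding rmul1_def Rm_def[symmetric]
proof (rule ext, rule sum.mono_neutral_left[OF assms(1) assms(2)])
  fix r show "\<forall>i\<in>S - Poly_Mapping.keys p. Const (Poly_Mapping.lookup p i) * Rm V i w r = 0"
    by (simp add: in_keys_iff)
qed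

lemma rmul1_add_p: "rmul1 V (p + q) w = add1 (rmul1 V p w) (rmul1 V q w)"
proof -
  let ?S = "Poly_Mapping.keys p \<union> Poly_Mapping.keys q"
  have f: "finite ?S" by simp
  have k: "Poly_Mapping.keys (p + q) \<subseteq> ?S" by (rule keys_add)
  have kp: "Poly_Mapping.keys p \<subseteq> ?S" and kq: "Poly_Mapping.keys q \<subseteq> ?S" by auto
  show ?thesis
    unfolding rmul1_alt[OF f k] rmul1_alt[OF f kp] rmul1_alt[OF f kq] add1_def
    by (auto simp: lookup_add Const_add algebra_simps sum.distrib)
qed

lemma rmul1_zero_p: "rmul1 V 0 w = (\<lambda>_. 0)"
  by (simp add: rmul1_def)

lemma rmul1_single: "rmul1 V (Poly_Mapping.single m c) w = smul1 (Const c) (Rm V m w)"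
  by (subst rmul1_alt[of "{m}"]) (auto simp: smul1_def)

lemma rmul1_Rm: "rmul1 V p w = (\<lambda>r. \<Sum>m\<in>Poly_Mapping.keys p. Const (Poly_Mapping.lookup p m) * Rm V m w r)"
  unfolding rmul1_def Rm_def ..

lemma lin1_rmul1: "lin1 (rmul1 V p)"
proof -
  have a: "Rm V m (add1 w u) = add1 (Rm V m w) (Rm V m u)" and b: "Rm V m (smul1 c w) = smul1 c (Rm V m w)" for m w u c
    using lin1_Rm[of V m] by (simp_all add: lin1_def)
  show ?thesis
    unfolding lin1_def rmul1_Rm a b
    by (auto simp: fun_eq_iff add1_def smul1_def algebra_simps sum.distrib sum_distrib_left)
qed

lemma rmul1_add_w: "rmul1 V p (add1 w u) = add1 (rmul1 V p w) (rmul1 V p u)"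
  using lin1_rmul1 by (simp add: lin1_def)
lemma rmul1_smul_w: "rmul1 V p (smul1 c w) = smul1 c (rmul1 V p w)"
  using lin1_rmul1 by (simp add: lin1_def)
lemma rmul1_zero_w: "rmul1 V p (\<lambda>_. 0) = (\<lambda>_. 0)"
  using lin1_rmul1 by (rule lin1_zero)

lemma update_single: "k \<notin> Poly_Mapping.keys f \<Longrightarrow> Poly_Mapping.update k v f = f + Poly_Mapping.single k v"
  by (rule poly_mapping_eqI) (auto simp: lookup_update lookup_add lookup_single in_keys_iff when_def)

lemma poly_induct [case_names zero step]:
  assumes "P 0" "\<And>f a b. P f \<Longrightarrow> P (f + Poly_Mapping.single a b)"
  shows "P p"
  by (induction p rule: update_induct) (auto simp: update_single assms)

lemma smul1_Const_mult: "smul1 (a * b) w = smul1 a (smul1 b w)"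
  by (simp add: smul1_def algebra_simps)

lemma rmul1_mult_single:
  "rmul1 (Valg p q) (Poly_Mapping.single a b * r) w = rmul1 (Valg p q) r (rmul1 (Valg p q) (Poly_Mapping.single a b) w)"
proof (induction r rule: poly_induct)
  case zero then show ?case by (simp add: rmul1_zero_p)
next
  case (step f c d)
  have "rmul1 (Valg p q) (Poly_Mapping.single c d) (rmul1 (Valg p q) (Poly_Mapping.single a b) w)
      = rmul1 (Valg p q) (Poly_Mapping.single (a + c) (b * d)) w"
    by (simp add: rmul1_single lin1_Rm[THEN lin1_def[THEN iffD1], THEN conjunct2]
        add.commute[of a c] Rm_add smul1_Const_mult[symmetric] Const_mult mult.commute)
  then show ?case
    by (simp add: distrib_left rmul1_add_p step mult_single)
qed

lemma rmul1_mult: "rmul1 (Valg p q) (r1 * r2) w = rmul1 (Valg p q) r2 (rmul1 (Valg p q) r1 w)"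
proof (induction r1 arbitrary: w rule: poly_induct)
  case zero then show ?case by (simp add: rmul1_zero_p rmul1_zero_w)
next
  case (step f a b)
  show ?case
    by (simp add: distrib_right rmul1_add_p step rmul1_mult_single rmul1_add_w)
qed

lemma rmul1_one: "rmul1 V 1 w = w"
proof -
  have "rmul1 V 1 w = rmul1 V (Poly_Mapping.single 0 1) w" by simp
  also have "\<dots> = w" by (simp only: rmul1_single Rm_zero) (simp add: smul1_def)
  finally show ?thesis .
qed

lemma rmul1_Const: "rmul1 V (Const c) w = smul1 (Const c) w"
proof -
  have "rmul1 V (Const c) w = smul1 (Const c) (Rm V 0 w)" using rmul1_single[of V 0 c w] unfolding Const_def .
  then show ?thesis by (simp add: Rm_zero)
qed

lemma Var_single: "Var i = Poly_Mapping.single (Poly_Mapping.single i 1) 1"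
  by (simp add: Var_def)

lemma rmul1_Var: "rmul1 V (Var i) w = rgen1 V i w"
  unfolding Var_single rmul1_single
  by (cases i) (simp_all add: Rm_def lookup_single smul1_def)

lemma Var_pow: "Var i ^ n = Poly_Mapping.single (Poly_Mapping.single i n) 1"
proof (induction n)
  case 0 then show ?case by simp
next
  case (Suc n)
  have "Poly_Mapping.single i (Suc n) = Poly_Mapping.single i 1 + Poly_Mapping.single i n"
    by (simp add: single_add[symmetric])
  then show ?case using Suc by (simp add: Var_single mult_single)
qed

lemma single_decomp: "Poly_Mapping.single a b = Const b * (Var E ^ Poly_Mapping.lookup a E * Var X ^ Poly_Mapping.lookup a X)"
proof -
  have "Poly_Mapping.single E (Poly_Mapping.lookup a E) + Poly_Mapping.single X (Poly_Mapping.lookup a X) = a"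
    by (rule poly_mapping_eqI) (case_tac k, simp_all add: lookup_add lookup_single)
  then show ?thesis
    by (simp add: Var_pow mult_single Const_def)
qed

lemma poly_induct2 [case_names C Vr A M]:
  assumes C: "\<And>c. P (Const c)" and Vr: "\<And>i. P (Var i)"
    and A: "\<And>p q. P p \<Longrightarrow> P q \<Longrightarrow> P (p + q)" and M: "\<And>p q. P p \<Longrightarrow> P q \<Longrightarrow> P (p * q)"
  shows "P p"
proof -
  have pw: "P (Var i ^ n)" for i n
  proof (induction n)
    case 0 then show ?case using C[of 1] by simp
  next
    case (Suc n) then show ?case by (simp add: M Vr)
  qed
  show ?thesis
  proof (induction p rule: poly_induct)
    case zero then show ?case using C[of 0] by simp
  next
    case (step f a b)
    then show ?case by (simp add: A single_decomp M C pw)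
  qed
qed

definition D0 :: "structc \<Rightarrow> poly2 \<Rightarrow> om1" where
  "D0 V r = add1 (rmul1 V r (dxb E)) (smul1 r (dxb E))"

lemma om1_self_eq: "add1 w w = w \<Longrightarrow> w = (\<lambda>_. 0)"
  by (simp add: add1_def fun_eq_iff)

lemma is_d_D0: "is_d (Valg p q) (D0 (Valg p q))"
  unfolding is_d_def
proof (intro conjI allI)
  fix r s
  show "D0 (Valg p q) (r + s) = add1 (D0 (Valg p q) r) (D0 (Valg p q) s)"
    by (simp add: D0_def rmul1_add_p add1_def smul1_def fun_eq_iff algebra_simps)
  show "D0 (Valg p q) (r * s) = add1 (rmul1 (Valg p q) s (D0 (Valg p q) r)) (smul1 r (D0 (Valg p q) s))"
    unfolding D0_def rmul1_mult rmul1_add_w rmul1_smul_w by (simp add: add1_def smul1_def fun_eq_iff algebra_simps)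
next
  fix mu
  show "D0 (Valg p q) (Var mu) = dxb mu"
    by (simp add: D0_def rmul1_Var rgen1_def add1_def smul1_def fun_eq_iff sum_idx dxb_def Valg_def)
next
  show "D0 (Valg p q) 1 = (\<lambda>a. 0)"
    by (simp add: D0_def rmul1_one add1_def smul1_def)
qed

lemma is_d_zero: "is_d V D \<Longrightarrow> D 0 = (\<lambda>_. 0)"
  by (rule om1_self_eq) (metis add_0 is_d_def)

lemma is_d_unique: "is_d V D1 \<Longrightarrow> is_d V D2 \<Longrightarrow> D1 r = D2 r"
proof (induction r rule: poly_induct2)
  case (C c)
  then show ?case using is_d_zero[OF C(1)] is_d_zero[OF C(2)] by (cases c) (simp_all add: is_d_def)
next
  case (Vr i) then show ?case by (simp add: is_d_def)
next
  case (A p q) then show ?case by (simp add: is_d_def)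
next
  case (M p q) then show ?case by (simp add: is_d_def)
qed

lemma dd_eq: "dd (Valg p q) = D0 (Valg p q)"
  unfolding dd_def
  by (rule the_equality[of "is_d (Valg p q)", OF is_d_D0]) (rule ext, rule is_d_unique[OF _ is_d_D0])

lemma is_d_dd: "is_d (Valg p q) (dd (Valg p q))"
  by (simp add: dd_eq is_d_D0)

lemma dd_Const [simp]: "dd (Valg p q) (Const c) = (\<lambda>_. 0)"
  using is_d_dd[of p q] is_d_zero[OF is_d_dd[of p q]] by (cases c) (simp_all add: is_d_def)
lemma dd_Var [simp]: "dd (Valg p q) (Var i) = dxb i"
  using is_d_dd[of p q] by (simp add: is_d_def)
lemma dd_add: "dd (Valg p q) (r + s) = add1 (dd (Valg p q) r) (dd (Valg p q) s)"
  using is_d_dd[of p q] by (simp add: is_d_def)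
lemma dd_mult: "dd (Valg p q) (r * s) = add1 (rmul1 (Valg p q) s (dd (Valg p q) r)) (smul1 r (dd (Valg p q) s))"
  using is_d_dd[of p q] by (simp add: is_d_def)

lemma rmul1_theta: "rmul1 (Valg p q) r (dxb E) = add1 (smul1 r (dxb E)) (dd (Valg p q) r)"
  by (simp add: dd_eq D0_def add1_def fun_eq_iff)

lemma tens_dxb: "tens V w (dxb k) = (\<lambda>a b. if b = k then w a else 0)"
  by (auto simp: tens_def dxb_def fun_eq_iff rmul1_one rmul1_zero_p)

lemma basis2_tens: "basis2 i j = tens V (dxb i) (dxb j)"
  unfolding tens_dxb by (auto simp: basis2_def dxb_def fun_eq_iff)

lemma tens_add_l: "tens V (add1 w u) v = add2 (tens V w v) (tens V u v)"
  unfolding tens_def add2_def rmul1_add_w by (simp add: add1_def)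
lemma tens_add_r: "tens V w (add1 u v) = add2 (tens V w u) (tens V w v)"
  by (simp add: tens_def add2_def rmul1_add_p add1_def)
lemma tens_smul_l: "tens V (smul1 c w) u = smul2 c (tens V w u)"
  unfolding tens_def smul2_def rmul1_smul_w by (simp add: smul1_def)
lemma tens_smul_r: "tens (Valg p q) w (smul1 c u) = tens (Valg p q) (rmul1 (Valg p q) c w) u"
  by (simp add: tens_def smul1_def rmul1_mult)

lemma om1_decomp: "u = add1 (smul1 (u E) (dxb E)) (smul1 (u X) (dxb X))"
  by (rule ext, case_tac x) (simp_all add: add1_def smul1_def dxb_def)

lemma om2_decomp: "T = add2 (tens V (\<lambda>a. T a E) (dxb E)) (tens V (\<lambda>a. T a X) (dxb X))"
  by (rule ext, rule ext, case_tac xa) (simp_all add: add2_def tens_dxb)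

lemma rmul1_decomp: "rmul1 V r u = add1 (smul1 (u E) (rmul1 V r (dxb E))) (smul1 (u X) (rmul1 V r (dxb X)))"
  by (subst om1_decomp[of u]) (simp add: rmul1_add_w rmul1_smul_w)

lemma rmul2_sum: "rmul2 V r T = add2 (tens V (\<lambda>a. T a E) (rmul1 V r (dxb E))) (tens V (\<lambda>a. T a X) (rmul1 V r (dxb X)))"
  by (simp add: rmul2_def sum_idx add2_def)

lemma tens_rmul_r: "tens (Valg p q) w (rmul1 (Valg p q) r u) = rmul2 (Valg p q) r (tens (Valg p q) w u)"
proof -
  let ?V = "Valg p q"
  have "tens ?V w (rmul1 ?V r u) = tens ?V w (add1 (smul1 (u E) (rmul1 ?V r (dxb E))) (smul1 (u X) (rmul1 ?V r (dxb X))))"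
    by (subst rmul1_decomp) (rule refl)
  also have "\<dots> = add2 (tens ?V (rmul1 ?V (u E) w) (rmul1 ?V r (dxb E))) (tens ?V (rmul1 ?V (u X) w) (rmul1 ?V r (dxb X)))"
    by (simp add: tens_add_r tens_smul_r)
  also have "\<dots> = rmul2 ?V r (tens ?V w u)"
    by (simp add: rmul2_sum tens_def)
  finally show ?thesis .
qed

lemma rmul2_add_T: "rmul2 V r (add2 S T) = add2 (rmul2 V r S) (rmul2 V r T)"
proof -
  have e: "(\<lambda>a. add2 S T a k) = add1 (\<lambda>a. S a k) (\<lambda>a. T a k)" for k by (simp add: add2_def add1_def)
  show ?thesis unfolding rmul2_sum e tens_add_l by (simp add: add2_def algebra_simps)
qed

lemma rmul2_smul_T: "rmul2 V r (smul2 c T) = smul2 c (rmul2 V r T)"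
proof -
  have e: "(\<lambda>a. smul2 c T a k) = smul1 c (\<lambda>a. T a k)" for k by (simp add: smul2_def smul1_def)
  show ?thesis unfolding rmul2_sum e tens_smul_l by (simp add: add2_def smul2_def algebra_simps)
qed

lemma rmul2_tens: "rmul2 (Valg p q) r (tens (Valg p q) w u) = tens (Valg p q) w (rmul1 (Valg p q) r u)"
  by (simp add: tens_rmul_r)

lemma rmul2_mult: "rmul2 (Valg p q) (r * s) T = rmul2 (Valg p q) s (rmul2 (Valg p q) r T)"
  by (simp add: rmul2_sum[of _ "r * s"] rmul2_sum[of _ r] rmul2_add_T rmul2_tens rmul1_mult)

lemma rmul2_add_p: "rmul2 V (r + s) T = add2 (rmul2 V r T) (rmul2 V s T)"
  by (simp add: rmul2_sum rmul1_add_p tens_add_r) (simp add: add2_def algebra_simps)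

lemma rmul2_Const: "rmul2 (Valg p q) (Const c) T = smul2 (Const c) T"
proof -
  have "rmul2 (Valg p q) (Const c) T = add2 (smul2 (Const c) (tens (Valg p q) (\<lambda>a. T a E) (dxb E)))
     (smul2 (Const c) (tens (Valg p q) (\<lambda>a. T a X) (dxb X)))"
    by (simp add: rmul2_sum rmul1_Const tens_smul_r tens_smul_l)
  also have "\<dots> = smul2 (Const c) T"
    by (subst (3) om2_decomp[of T "Valg p q"]) (simp add: smul2_def add2_def algebra_simps)
  finally show ?thesis .
qed

lemma rmul2_one: "rmul2 (Valg p q) 1 T = T"
  using rmul2_Const[of p q 1 T] by (simp add: smul2_def)
lemma rmul2_zero_p: "rmul2 (Valg p q) 0 T = zero2"
  using rmul2_Const[of p q 0 T] by (simp add: smul2_def zero2_def)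

definition NX :: "bit \<Rightarrow> bit \<Rightarrow> om1 \<Rightarrow> om1" where
  "NX p q w = (\<lambda>r. (if r = X then w E else 0) + w X * Const (if r = E then p else q))"

lemma rgenX: "rgen1 (Valg p q) X w = add1 (smul1 (Var X) w) (NX p q w)"
  by (rule ext, case_tac x) (simp_all add: rgen1_def sum_idx Valg_def add1_def smul1_def NX_def)

definition KX2 :: "bit \<Rightarrow> bit \<Rightarrow> om2 \<Rightarrow> om2" where
  "KX2 p q T = (\<lambda>a b. (if a = X then T E b else 0) + T X b * Const (if a = E then p else q)
       + (if b = X then T a E else 0) + T a X * Const (if b = E then p else q))"

lemma rmul2_VarE: "rmul2 (Valg p q) (Var E) T = smul2 (Var E) T"
  by (rule ext, rule ext, case_tac x; case_tac xa)
    (simp_all add: rmul2_sum rmul1_Var rgenE tens_def add2_def smul2_def add1_def smul1_def dxb_def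
      rmul1_add_p rmul1_mult rmul1_one rmul1_zero_p algebra_simps)

lemma rmul2_VarX: "rmul2 (Valg p q) (Var X) T = add2 (smul2 (Var X) T) (KX2 p q T)"
  by (rule ext, rule ext, case_tac x; case_tac xa)
    (simp_all add: rmul2_sum rmul1_Var rgenX NX_def KX2_def tens_def add2_def smul2_def add1_def smul1_def dxb_def
      rmul1_add_p rmul1_mult rmul1_one rmul1_zero_p rmul1_Const algebra_simps)

lemma poly2_ac: "(a::poly2) + b + c = a + k + y \<Longrightarrow> y = b + c + k"
proof -
  assume h: "a + b + c = a + k + y"
  have "y = (a + k + y) + (a + k)" by (simp add: add_ac)
  also have "\<dots> = (a + b + c) + (a + k)" by (simp only: h)
  also have "\<dots> = b + c + k" by (simp add: add_ac)
  finally show ?thesis .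
qed

lemma add2_cancel3: "add2 (add2 A B) C = add2 (add2 A K) Y \<Longrightarrow> Y = add2 (add2 B C) K"
  unfolding add2_def by (rule ext, rule ext, rule poly2_ac, drule fun_cong, drule fun_cong) simp

lemma add2_zero2: "add2 A zero2 = A" by (simp add: add2_def zero2_def)


lemma sub2_eq: "sub2 = add2" by (simp add: sub2_def add2_def fun_eq_iff)

definition Fs :: "structc \<Rightarrow> (om2 \<Rightarrow> om2) \<Rightarrow> om1 \<Rightarrow> om2" where
  "Fs V s w = sub2 (tens V (dxb E) w) (s (tens V w (dxb E)))"

lemma bm_add: "bimodule_map2 V s \<Longrightarrow> s (add2 S T) = add2 (s S) (s T)" by (simp add: bimodule_map2_def)
lemma bm_smul: "bimodule_map2 V s \<Longrightarrow> s (smul2 c T) = smul2 c (s T)" by (simp add: bimodule_map2_def)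
lemma bm_rmul: "bimodule_map2 V s \<Longrightarrow> s (rmul2 V c T) = rmul2 V c (s T)" by (simp add: bimodule_map2_def)

lemma tens_zero_l: "tens V (\<lambda>_. 0) u = zero2"
  by (simp add: tens_def zero2_def rmul1_zero_w)

lemma Fs_add: "bimodule_map2 V s \<Longrightarrow> Fs V s (add1 w u) = add2 (Fs V s w) (Fs V s u)"
  by (simp add: Fs_def tens_add_r tens_add_l bm_add sub2_eq) (simp add: add2_def algebra_simps)

lemma Fs_left: "bimodule_map2 (Valg p q) s \<Longrightarrow>
   Fs (Valg p q) s (smul1 r w) = add2 (smul2 r (Fs (Valg p q) s w)) (tens (Valg p q) (dd (Valg p q) r) w)"
  by (simp add: Fs_def tens_smul_r tens_smul_l rmul1_theta tens_add_l bm_smul sub2_eq)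
    (simp add: add2_def smul2_def algebra_simps)

lemma smul_theta: "smul1 r (dxb E) = add1 (rmul1 (Valg p q) r (dxb E)) (dd (Valg p q) r)"
  by (simp add: rmul1_theta add1_def fun_eq_iff)

lemma rmul2_add2_rev: "add2 (rmul2 V r S) (rmul2 V r T) = rmul2 V r (add2 S T)"
  by (simp add: rmul2_add_T)

lemma Fs_right: "bimodule_map2 (Valg p q) s \<Longrightarrow>
   Fs (Valg p q) s (rmul1 (Valg p q) r w) = add2 (rmul2 (Valg p q) r (Fs (Valg p q) s w)) (s (tens (Valg p q) w (dd (Valg p q) r)))"
proof -
  assume b: "bimodule_map2 (Valg p q) s"
  let ?V = "Valg p q"
  have "tens ?V (rmul1 ?V r w) (dxb E) = tens ?V w (smul1 r (dxb E))" by (simp add: tens_smul_r)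
  also have "\<dots> = add2 (rmul2 ?V r (tens ?V w (dxb E))) (tens ?V w (dd ?V r))"
    by (simp only: smul_theta[of r p q] tens_add_r tens_rmul_r)
  finally have e: "tens ?V (rmul1 ?V r w) (dxb E) = add2 (rmul2 ?V r (tens ?V w (dxb E))) (tens ?V w (dd ?V r))" .
  show ?thesis
    unfolding Fs_def e using b
    by (simp add: bm_add bm_rmul tens_rmul_r sub2_eq rmul2_add_T) (simp add: add2_def algebra_simps)
qed

lemma Fs_conn: "bimodule_map2 (Valg p q) s \<Longrightarrow> bimod_conn (Valg p q) (Fs (Valg p q) s) s"
  by (simp add: bimod_conn_def Fs_add Fs_left Fs_right)

lemma conn_add: "bimod_conn V nab s \<Longrightarrow> nab (add1 w u) = add2 (nab w) (nab u)" by (simp add: bimod_conn_def)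
lemma conn_left: "bimod_conn V nab s \<Longrightarrow> nab (smul1 r w) = add2 (smul2 r (nab w)) (tens V (dd V r) w)" by (simp add: bimod_conn_def)
lemma conn_right: "bimod_conn V nab s \<Longrightarrow> nab (rmul1 V r w) = add2 (rmul2 V r (nab w)) (s (tens V w (dd V r)))" by (simp add: bimod_conn_def)
lemma conn_bm: "bimod_conn V nab s \<Longrightarrow> bimodule_map2 V s" by (simp add: bimod_conn_def)

lemma expand_gen:
  assumes a: "\<And>w u. f (add1 w u) = add2 (f w) (f u)"
    and l: "\<And>r w. f (smul1 r w) = add2 (smul2 r (f w)) (tens V (dd V r) w)"
  shows "f w = add2 (add2 (smul2 (w E) (f (dxb E))) (tens V (dd V (w E)) (dxb E)))
                    (add2 (smul2 (w X) (f (dxb X))) (tens V (dd V (w X)) (dxb X)))"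
  by (subst om1_decomp[of w]) (simp only: a l)

lemma conn_expand: "bimod_conn V nab s \<Longrightarrow> nab w = add2 (add2 (smul2 (w E) (nab (dxb E))) (tens V (dd V (w E)) (dxb E)))
                    (add2 (smul2 (w X) (nab (dxb X))) (tens V (dd V (w X)) (dxb X)))"
  by (rule expand_gen) (simp_all add: conn_add conn_left)

lemma cancel_poly: "(x::poly2) + b = x + y \<Longrightarrow> y = b"
  by simp

lemma conn_sE: assumes c: "bimod_conn (Valg p q) nab s"
  shows "s (basis2 mu E) = add2 (basis2 E mu) (nab (dxb mu))"
proof -
  let ?V = "Valg p q"
  have r: "rmul1 ?V (Var E) (dxb mu) = add1 (smul1 (Var E) (dxb mu)) (dxb mu)"
    by (simp add: rmul1_Var rgenE)
  have "nab (rmul1 ?V (Var E) (dxb mu)) = add2 (rmul2 ?V (Var E) (nab (dxb mu))) (s (tens ?V (dxb mu) (dd ?V (Var E))))"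
    by (rule conn_right[OF c])
  then have "add2 (add2 (smul2 (Var E) (nab (dxb mu))) (basis2 E mu)) (nab (dxb mu))
      = add2 (smul2 (Var E) (nab (dxb mu))) (s (basis2 mu E))"
    unfolding r conn_add[OF c] conn_left[OF c] by (simp add: rmul2_VarE basis2_tens[symmetric])
  then have "add2 (add2 (smul2 (Var E) (nab (dxb mu))) (basis2 E mu)) (nab (dxb mu))
      = add2 (add2 (smul2 (Var E) (nab (dxb mu))) zero2) (s (basis2 mu E))"
    by (simp only: add2_zero2)
  then show ?thesis by (drule_tac add2_cancel3) (simp add: add2_zero2)
qed

lemma Fs_dxb: "bimodule_map2 V s \<Longrightarrow> Fs V s (dxb mu) = add2 (basis2 E mu) (s (basis2 mu E))"
  by (simp add: Fs_def basis2_tens[symmetric] sub2_eq)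

lemma conn_eq_Fs: assumes c: "bimod_conn (Valg p q) nab s"
  shows "nab w = Fs (Valg p q) s w"
proof -
  have b: "bimodule_map2 (Valg p q) s" by (rule conn_bm[OF c])
  have g: "nab (dxb mu) = Fs (Valg p q) s (dxb mu)" for mu
    by (simp add: Fs_dxb[OF b] conn_sE[OF c]) (simp add: add2_def fun_eq_iff)
  have F: "Fs (Valg p q) s w = add2 (add2 (smul2 (w E) (Fs (Valg p q) s (dxb E))) (tens (Valg p q) (dd (Valg p q) (w E)) (dxb E)))
                    (add2 (smul2 (w X) (Fs (Valg p q) s (dxb X))) (tens (Valg p q) (dd (Valg p q) (w X)) (dxb X)))"
    by (rule expand_gen) (simp_all add: Fs_add[OF b] Fs_left[OF b])
  show ?thesis by (subst conn_expand[OF c]) (simp only: g F)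
qed

lemma conn_sX: assumes c: "bimod_conn (Valg p q) nab s"
  shows "s (basis2 mu X) = add2 (add2 (basis2 X mu) (nab (NX p q (dxb mu)))) (KX2 p q (nab (dxb mu)))"
proof -
  let ?V = "Valg p q"
  have r: "rmul1 ?V (Var X) (dxb mu) = add1 (smul1 (Var X) (dxb mu)) (NX p q (dxb mu))"
    by (simp add: rmul1_Var rgenX)
  have "nab (rmul1 ?V (Var X) (dxb mu)) = add2 (rmul2 ?V (Var X) (nab (dxb mu))) (s (tens ?V (dxb mu) (dd ?V (Var X))))"
    by (rule conn_right[OF c])
  then have "add2 (add2 (smul2 (Var X) (nab (dxb mu))) (basis2 X mu)) (nab (NX p q (dxb mu)))
      = add2 (add2 (smul2 (Var X) (nab (dxb mu))) (KX2 p q (nab (dxb mu)))) (s (basis2 mu X))"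
    unfolding r conn_add[OF c] conn_left[OF c] by (simp add: rmul2_VarX basis2_tens[symmetric])
  then show ?thesis by (rule add2_cancel3)
qed

definition symm :: "om2 \<Rightarrow> bool" where "symm T \<longleftrightarrow> (\<forall>a b. T a b = T b a)"

lemma rmul2_symm: "symm T \<Longrightarrow> symm (rmul2 (Valg p q) r T)"
proof (induction r arbitrary: T rule: poly_induct2)
  case (C c) then show ?case by (simp add: rmul2_Const symm_def smul2_def)
next
  case (Vr i) then show ?case
  proof (cases i)
    case E then show ?thesis using Vr by (simp add: rmul2_VarE symm_def smul2_def)
  next
    case X
    have "\<And>a b. KX2 p q T a b = KX2 p q T b a"
      using Vr unfolding symm_def KX2_def by (case_tac a; case_tac b) (simp_all add: algebra_simps)
    then show ?thesis using Vr X by (simp add: rmul2_VarX symm_def smul2_def add2_def)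
  qed
next
  case (A r1 r2) then show ?case by (simp add: rmul2_add_p symm_def add2_def)
next
  case (M r1 r2) then show ?case by (simp add: rmul2_mult)
qed

lemma wk_symm: "T \<in> wedge_ker (Valg p q) \<Longrightarrow> symm T"
proof (induction rule: wedge_ker.induct)
  case wk_zero then show ?case by (simp add: symm_def zero2_def)
next
  case (wk_diag mu) then show ?case unfolding symm_def basis2_def by auto
next
  case (wk_sym mu nu) then show ?case
    unfolding symm_def basis2_def add2_def by (intro allI, subst add.commute) (simp only: conj_commute)
next
  case (wk_add S T) then show ?case by (simp add: symm_def add2_def)
next
  case (wk_lmul T c) then show ?case by (simp add: symm_def smul2_def)
next
  case (wk_rmul T c) then show ?case by (simp add: rmul2_symm)
qed

lemma symm_wk: assumes "symm T" shows "T \<in> wedge_ker V"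
proof -
  have "T = add2 (add2 (smul2 (T E E) (basis2 E E)) (smul2 (T X X) (basis2 X X)))
             (smul2 (T E X) (add2 (basis2 E X) (basis2 X E)))"
    using assms unfolding symm_def
    by (intro ext, case_tac x; case_tac xa) (simp_all add: add2_def smul2_def basis2_def)
  also have "\<dots> \<in> wedge_ker V"
    by (intro wedge_ker.intros)
  finally show ?thesis .
qed

lemma dd1_expand: "dd1 V w = add2 (tens V (dd V (w E)) (dxb E)) (tens V (dd V (w X)) (dxb X))"
  by (simp add: dd1_def sum_idx add2_def)

lemma torsion_iff: assumes c: "bimod_conn (Valg p q) nab s"
  shows "torsion_free (Valg p q) nab \<longleftrightarrow> symm (nab (dxb E)) \<and> symm (nab (dxb X))"
proof -
  have e: "sub2 (nab w) (dd1 (Valg p q) w) = add2 (smul2 (w E) (nab (dxb E))) (smul2 (w X) (nab (dxb X)))" for w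
    by (subst conn_expand[OF c, of w]) (simp add: dd1_expand sub2_eq add2_def fun_eq_iff algebra_simps)
  have d: "dxb mu E = (if mu = E then 1 else 0)" "dxb mu X = (if mu = X then 1 else 0)" for mu
    by (simp_all add: dxb_def)
  show ?thesis
  proof
    assume t: "torsion_free (Valg p q) nab"
    have "sub2 (nab (dxb mu)) (dd1 (Valg p q) (dxb mu)) \<in> wedge_ker (Valg p q)" for mu
      using t by (simp add: torsion_free_def)
    then have "symm (add2 (smul2 (dxb mu E) (nab (dxb E))) (smul2 (dxb mu X) (nab (dxb X))))" for mu
      unfolding e by (rule wk_symm)
    from this[of E] this[of X] show "symm (nab (dxb E)) \<and> symm (nab (dxb X))"
      by (simp_all add: d symm_def add2_def smul2_def)
  next
    assume "symm (nab (dxb E)) \<and> symm (nab (dxb X))"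
    then show "torsion_free (Valg p q) nab"
      unfolding torsion_free_def e by (auto intro!: symm_wk simp: symm_def add2_def smul2_def)
  qed
qed

definition cT :: "(idx \<Rightarrow> idx \<Rightarrow> bit) \<Rightarrow> om2" where "cT M = (\<lambda>a b. Const (M a b))"
definition bb :: "idx \<Rightarrow> idx \<Rightarrow> idx \<Rightarrow> idx \<Rightarrow> bit" where "bb i j = (\<lambda>a b. if a = i \<and> b = j then 1 else 0)"

lemma Const_if: "Const (if P then x else y) = (if P then Const x else Const y)" by simp
lemma Const_eq_iff: "Const x = Const y \<longleftrightarrow> x = y" by (metis Const_def lookup_single_eq)
lemma Const_eq_0: "Const x = 0 \<longleftrightarrow> x = 0" using Const_eq_iff[of x 0] by simp

lemma cT_eq_iff: "cT M = cT N \<longleftrightarrow> M = N"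
  by (auto simp: cT_def fun_eq_iff Const_eq_iff)

lemma basis2_cT: "basis2 i j = cT (bb i j)"
  by (simp add: basis2_def cT_def bb_def Const_if fun_eq_iff)

lemma add2_cT: "add2 (cT M) (cT N) = cT (\<lambda>a b. M a b + N a b)"
  by (simp add: add2_def cT_def Const_add)
lemma smul2_cT: "smul2 (Const c) (cT M) = cT (\<lambda>a b. c * M a b)"
  by (simp add: smul2_def cT_def Const_mult)

definition KXb :: "bit \<Rightarrow> bit \<Rightarrow> (idx \<Rightarrow> idx \<Rightarrow> bit) \<Rightarrow> idx \<Rightarrow> idx \<Rightarrow> bit" where
  "KXb p q M = (\<lambda>a b. (if a = X then M E b else 0) + M X b * (if a = E then p else q)
       + (if b = X then M a E else 0) + M a X * (if b = E then p else q))"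

lemma KX2_cT: "KX2 p q (cT M) = cT (KXb p q M)"
  by (rule ext, rule ext, case_tac x; case_tac xa) (simp_all add: KX2_def KXb_def cT_def Const_add Const_mult)

definition nxb :: "bit \<Rightarrow> bit \<Rightarrow> idx \<Rightarrow> idx \<Rightarrow> bit" where
  "nxb p q mu r = (if r = X \<and> mu = E then 1 else 0) + (if mu = X then (if r = E then p else q) else 0)"

lemma NX_dxb: "NX p q (dxb mu) = (\<lambda>r. Const (nxb p q mu r))"
  by (rule ext, case_tac mu; case_tac r) (simp_all add: NX_def nxb_def dxb_def)

lemma nab_cvec: assumes c: "bimod_conn (Valg p q) nab s"
  shows "nab (\<lambda>r. Const (v r)) = add2 (smul2 (Const (v E)) (nab (dxb E))) (smul2 (Const (v X)) (nab (dxb X)))"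
  by (subst conn_expand[OF c]) (simp add: tens_zero_l add2_def zero2_def)

definition Sbit :: "bit \<Rightarrow> bit \<Rightarrow> (idx \<Rightarrow> idx \<Rightarrow> idx \<Rightarrow> bit) \<Rightarrow> idx \<Rightarrow> idx \<Rightarrow> idx \<Rightarrow> idx \<Rightarrow> bit" where
  "Sbit p q G mu nu = (if nu = E then (\<lambda>a b. bb E mu a b + G mu a b)
     else (\<lambda>a b. bb X mu a b + nxb p q mu E * G E a b + nxb p q mu X * G X a b + KXb p q (G mu) a b))"

lemma s_basis_Sbit:
  assumes c: "bimod_conn (Valg p q) nab s" and n: "\<And>mu. nab (dxb mu) = cT (G mu)"
  shows "s (basis2 mu nu) = cT (Sbit p q G mu nu)"
proof (cases nu)
  case E
  have "s (basis2 mu E) = add2 (basis2 E mu) (nab (dxb mu))" by (rule conn_sE[OF c])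
  then show ?thesis using E by (simp add: n basis2_cT add2_cT Sbit_def)
next
  case X
  have "s (basis2 mu X) = add2 (add2 (basis2 X mu) (nab (NX p q (dxb mu)))) (KX2 p q (nab (dxb mu)))" by (rule conn_sX[OF c])
  then show ?thesis using X
    by (simp add: add.assoc n NX_dxb nab_cvec[OF c] basis2_cT add2_cT smul2_cT KX2_cT Sbit_def)
qed

lemma T_decomp: "T = add2 (add2 (smul2 (T E E) (basis2 E E)) (smul2 (T E X) (basis2 E X)))
                          (add2 (smul2 (T X E) (basis2 X E)) (smul2 (T X X) (basis2 X X)))"
  by (rule ext, rule ext, case_tac x; case_tac xa) (simp_all add: add2_def smul2_def basis2_def)

lemma s_left: assumes b: "bimodule_map2 V s"
  shows "s T = (\<lambda>a b. \<Sum>i\<in>UNIV. \<Sum>j\<in>UNIV. T i j * s (basis2 i j) a b)"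
  by (subst T_decomp[of T], unfold bm_add[OF b] bm_smul[OF b]) (simp add: sum_idx add2_def smul2_def add_ac)

definition sapp :: "(idx \<Rightarrow> idx \<Rightarrow> idx \<Rightarrow> idx \<Rightarrow> bit) \<Rightarrow> (idx \<Rightarrow> idx \<Rightarrow> bit) \<Rightarrow> idx \<Rightarrow> idx \<Rightarrow> bit" where
  "sapp Sb M = (\<lambda>a b. \<Sum>i\<in>UNIV. \<Sum>j\<in>UNIV. M i j * Sb i j a b)"

lemma s_cT: assumes b: "bimodule_map2 V s" and sb: "\<And>i j. s (basis2 i j) = cT (Sb i j)"
  shows "s (cT M) = cT (sapp Sb M)"
  by (subst s_left[OF b]) (simp add: sb cT_def sapp_def sum_idx Const_add Const_mult)

definition mcx :: "(idx \<Rightarrow> idx \<Rightarrow> bit) \<Rightarrow> (idx \<Rightarrow> idx \<Rightarrow> idx \<Rightarrow> bit) \<Rightarrow> (idx \<Rightarrow> idx \<Rightarrow> idx \<Rightarrow> idx \<Rightarrow> bit) \<Rightarrow> idx \<Rightarrow> idx \<Rightarrow> idx \<Rightarrow> bit" where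
  "mcx g G Sb a b c = (\<Sum>mu\<in>UNIV. g mu c * G mu a b) + sapp Sb (\<lambda>i j. \<Sum>nu\<in>UNIV. g i nu * G nu j c) a b"

lemma tens21_dxb: "tens21 (Valg p q) T (dxb k) = (\<lambda>a b c. if c = k then T a b else 0)"
  by (rule ext, rule ext, rule ext) (simp add: tens21_def dxb_def rmul2_one rmul2_zero_p zero2_def)

lemma mc_iff:
  assumes c: "bimod_conn (Valg p q) nab s" and n: "\<And>mu. nab (dxb mu) = cT (G mu)"
    and sb: "\<And>i j. s (basis2 i j) = cT (Sb i j)"
  shows "metric_compat (Valg p q) g nab s \<longleftrightarrow> (\<forall>a b c. mcx g G Sb a b c = 0)"
proof -
  let ?V = "Valg p q"
  have b: "bimodule_map2 ?V s" by (rule conn_bm[OF c])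
  have n1: "nab (smul1 (Const x) (dxb mu)) = cT (\<lambda>a b. x * G mu a b)" for x :: bit and mu
    by (simp add: conn_left[OF c] n tens_zero_l smul2_cT) (simp add: add2_def zero2_def)
  have A: "(\<Sum>mu\<in>UNIV. \<Sum>nu\<in>UNIV. tens21 ?V (nab (smul1 (Const (g mu nu)) (dxb mu))) (dxb nu) a b c)
        = Const (\<Sum>mu\<in>UNIV. g mu c * G mu a b)" for a b c
    by (cases c) (simp_all add: n1 tens21_dxb sum_idx cT_def Const_add Const_mult)
  have t12: "tens12 ?V (smul1 (Const x) (dxb mu)) (cT M) = (\<lambda>i j k. Const (if i = mu then x * M j k else 0))" for x :: bit and mu M
    by (rule ext, rule ext, rule ext) (simp add: tens12_def cT_def rmul1_Const smul1_def dxb_def Const_mult)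
  have Ph: "(\<lambda>i j. \<Sum>mu\<in>UNIV. \<Sum>nu\<in>UNIV. tens12 ?V (smul1 (Const (g mu nu)) (dxb mu)) (nab (dxb nu)) i j c)
        = cT (\<lambda>i j. \<Sum>nu\<in>UNIV. g i nu * G nu j c)" for c
    unfolding n t12 by (simp add: fun_eq_iff all_idx sum_idx cT_def Const_add)
  have B: "sigma_id ?V s (\<lambda>i j k. \<Sum>mu\<in>UNIV. \<Sum>nu\<in>UNIV. tens12 ?V (smul1 (Const (g mu nu)) (dxb mu)) (nab (dxb nu)) i j k) a b c
        = Const (sapp Sb (\<lambda>i j. \<Sum>nu\<in>UNIV. g i nu * G nu j c) a b)" for a b c
  proof -
    have "sigma_id ?V s (\<lambda>i j k. \<Sum>mu\<in>UNIV. \<Sum>nu\<in>UNIV. tens12 ?V (smul1 (Const (g mu nu)) (dxb mu)) (nab (dxb nu)) i j k) a b c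
       = s (\<lambda>i j. \<Sum>mu\<in>UNIV. \<Sum>nu\<in>UNIV. tens12 ?V (smul1 (Const (g mu nu)) (dxb mu)) (nab (dxb nu)) i j c) a b"
      by (cases c) (simp_all add: sigma_id_def tens21_dxb sum_idx)
    also have "\<dots> = Const (sapp Sb (\<lambda>i j. \<Sum>nu\<in>UNIV. g i nu * G nu j c) a b)"
      by (simp only: Ph s_cT[OF b sb]) (simp add: cT_def)
    finally show ?thesis .
  qed
  show ?thesis
    unfolding metric_compat_def A B
    by (simp add: fun_eq_iff Const_add[symmetric] Const_eq_0 mcx_def)
qed

lemma bit_add_self2 [simp]: "(a::bit) + (a + b) = b"
  by (metis add.assoc add_0 bit_add_self)

definition sfun :: "(idx \<Rightarrow> idx \<Rightarrow> idx \<Rightarrow> idx \<Rightarrow> bit) \<Rightarrow> om2 \<Rightarrow> om2" where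
  "sfun Sb T = (\<lambda>a b. \<Sum>i\<in>UNIV. \<Sum>j\<in>UNIV. T i j * Const (Sb i j a b))"

lemma sfun_add: "sfun Sb (add2 S T) = add2 (sfun Sb S) (sfun Sb T)"
  by (simp add: sfun_def add2_def sum_idx algebra_simps)
lemma sfun_smul: "sfun Sb (smul2 c T) = smul2 c (sfun Sb T)"
  by (simp add: sfun_def smul2_def sum_idx algebra_simps)
lemma sfun_basis: "sfun Sb (basis2 i j) = cT (Sb i j)"
  by (cases i; cases j) (simp_all add: sfun_def basis2_def sum_idx cT_def)
lemma sfun_cT: "sfun Sb (cT M) = cT (sapp Sb M)"
  by (simp add: sfun_def cT_def sapp_def sum_idx Const_add Const_mult)

lemma sapp_bb: "sapp Sb (bb i j) = Sb i j"
  by (cases i; cases j) (simp_all add: sapp_def bb_def sum_idx fun_eq_iff)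

lemma KX2_add: "KX2 p q (add2 S T) = add2 (KX2 p q S) (KX2 p q T)"
  by (rule ext, rule ext, case_tac x; case_tac xa) (simp_all add: KX2_def add2_def algebra_simps)
lemma KX2_smul: "KX2 p q (smul2 c T) = smul2 c (KX2 p q T)"
  by (rule ext, rule ext, case_tac x; case_tac xa) (simp_all add: KX2_def smul2_def algebra_simps)

lemma sfun_KX:
  assumes rl: "\<And>i j. sapp Sb (KXb p q (bb i j)) = KXb p q (Sb i j)"
  shows "sfun Sb (KX2 p q T) = KX2 p q (sfun Sb T)"
proof -
  have b: "sfun Sb (KX2 p q (basis2 i j)) = KX2 p q (sfun Sb (basis2 i j))" for i j
    by (simp add: basis2_cT KX2_cT sfun_cT rl sapp_bb)
  show ?thesis
    by (subst (1 2) T_decomp[of T]) (simp only: KX2_add KX2_smul sfun_add sfun_smul b)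
qed

lemma sfun_rmul:
  assumes rl: "\<And>i j. sapp Sb (KXb p q (bb i j)) = KXb p q (Sb i j)"
  shows "sfun Sb (rmul2 (Valg p q) r T) = rmul2 (Valg p q) r (sfun Sb T)"
proof (induction r arbitrary: T rule: poly_induct2)
  case (C c) then show ?case by (simp add: rmul2_Const sfun_smul)
next
  case (Vr i) then show ?case
    by (cases i) (simp_all add: rmul2_VarE rmul2_VarX sfun_smul sfun_add sfun_KX[OF rl])
next
  case (A r1 r2) then show ?case by (simp add: rmul2_add_p sfun_add)
next
  case (M r1 r2) then show ?case by (simp add: rmul2_mult)
qed

lemma sfun_bm: "(\<And>i j. sapp Sb (KXb p q (bb i j)) = KXb p q (Sb i j)) \<Longrightarrow> bimodule_map2 (Valg p q) (sfun Sb)"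
  by (simp add: bimodule_map2_def sfun_add sfun_smul sfun_rmul)

lemma sfun_comp: "sfun Sb (sfun Sb' T) = sfun (\<lambda>i j. sapp Sb (Sb' i j)) T"
  by (simp add: sfun_def sapp_def sum_idx Const_add Const_mult fun_eq_iff algebra_simps)

lemma sfun_bb: "sfun bb T = T"
  by (rule ext, rule ext, case_tac x; case_tac xa) (simp_all add: sfun_def bb_def sum_idx)

lemma sfun_invol: "(\<And>i j. sapp Sb (Sb i j) = bb i j) \<Longrightarrow> sfun Sb (sfun Sb T) = T"
proof -
  assume h: "\<And>i j. sapp Sb (Sb i j) = bb i j"
  have "(\<lambda>i j. sapp Sb (Sb i j)) = bb" by (simp add: h fun_eq_iff)
  then show ?thesis by (simp add: sfun_comp sfun_bb)
qed

lemma sfun_bij: "(\<And>i j. sapp Sb (Sb i j) = bb i j) \<Longrightarrow> bij (sfun Sb)"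
  by (rule o_bij[of "sfun Sb"]) (simp_all add: fun_eq_iff sfun_invol)

lemma symm_cT: "symm (cT M) \<longleftrightarrow> (\<forall>a b. M a b = M b a)"
  by (simp add: symm_def cT_def Const_eq_iff)

lemma bwd:
  assumes sym: "\<And>mu a b. G mu a b = G mu b a"
    and rl: "\<And>i j. sapp (Sbit p q G) (KXb p q (bb i j)) = KXb p q (Sbit p q G i j)"
    and inv: "\<And>i j. sapp (Sbit p q G) (Sbit p q G i j) = bb i j"
    and mc: "\<And>a b c. mcx g G (Sbit p q G) a b c = 0"
  shows "\<exists>nab s. QLC (Valg p q) g nab s \<and> const_coeff nab \<and> nab (dxb E) = cT (G E) \<and> nab (dxb X) = cT (G X)"
proof -
  let ?V = "Valg p q" and ?S = "Sbit p q G"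
  let ?s = "sfun ?S"
  let ?n = "Fs ?V ?s"
  have b: "bimodule_map2 ?V ?s" by (rule sfun_bm[OF rl])
  have c: "bimod_conn ?V ?n ?s" by (rule Fs_conn[OF b])
  have n: "?n (dxb mu) = cT (G mu)" for mu
    unfolding Fs_dxb[OF b] sfun_basis by (simp add: basis2_cT add2_cT Sbit_def)
  have "QLC ?V g ?n ?s"
    unfolding QLC_def
  proof (intro conjI)
    show "bimod_conn ?V ?n ?s" by (rule c)
    show "bij ?s" by (rule sfun_bij[OF inv])
    show "torsion_free ?V ?n" unfolding torsion_iff[OF c] n symm_cT using sym by blast
    show "metric_compat ?V g ?n ?s" by (simp add: mc_iff[OF c n sfun_basis] mc)
  qed
  moreover have "const_coeff ?n" unfolding const_coeff_def by (metis n cT_def)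
  ultimately show ?thesis using n by blast
qed

lemma fwd:
  assumes Q: "QLC (Valg p q) g nab s" and cc: "const_coeff nab"
  shows "\<exists>G. nab (dxb E) = cT (G E) \<and> nab (dxb X) = cT (G X) \<and> (\<forall>mu a b. G mu a b = G mu b a)
     \<and> (\<forall>a b c. mcx g G (Sbit p q G) a b c = 0)"
proof -
  have c: "bimod_conn (Valg p q) nab s" and t: "torsion_free (Valg p q) nab" and m: "metric_compat (Valg p q) g nab s"
    using Q by (simp_all add: QLC_def)
  obtain GE GX where gE: "nab (dxb E) = cT GE" and gX: "nab (dxb X) = cT GX"
    using cc unfolding const_coeff_def cT_def by metis
  define G where "G = (\<lambda>mu. if mu = E then GE else GX)"
  have n: "nab (dxb mu) = cT (G mu)" for mu by (cases mu) (simp_all add: G_def gE gX)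
  have s2: "symm (cT (G mu))" for mu using t torsion_iff[OF c] n by (cases mu) auto
  then have sym: "\<forall>mu a b. G mu a b = G mu b a" unfolding symm_cT by blast
  have mc: "\<forall>a b c. mcx g G (Sbit p q G) a b c = 0"
    using m mc_iff[OF c n s_basis_Sbit[OF c n]] by simp
  show ?thesis using n sym mc by blast
qed

lemma zero_case:
  assumes c: "bimod_conn (Valg p q) nab s" and z: "nab (dxb E) = zero2" "nab (dxb X) = zero2"
  shows "s (basis2 mu nu) = basis2 nu mu"
proof -
  have n: "nab (dxb m) = cT ((\<lambda>_ _ _. 0) m)" for m using z by (cases m) (simp_all add: zero2_def cT_def)
  have "s (basis2 mu nu) = cT (Sbit p q (\<lambda>_ _ _. 0) mu nu)" by (rule s_basis_Sbit[OF c n])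
  also have "\<dots> = basis2 nu mu"
    by (cases nu) (simp_all add: basis2_cT Sbit_def KXb_def)
  finally show ?thesis .
qed

definition Gm :: "bit \<Rightarrow> bit \<Rightarrow> bit \<Rightarrow> bit \<Rightarrow> bit \<Rightarrow> bit \<Rightarrow> idx \<Rightarrow> idx \<Rightarrow> idx \<Rightarrow> bit" where
  "Gm b1 b2 b3 b4 b5 b6 = (\<lambda>mu. if mu = E then mat2 b1 b2 b2 b3 else mat2 b4 b5 b5 b6)"

lemma mat2_eq_iff: "mat2 a b c d = mat2 a' b' c' d' \<longleftrightarrow> a = a' \<and> b = b' \<and> c = c' \<and> d = d'"
  by (auto simp: mat2_def fun_eq_iff all_idx)

lemma cten_cT: "cten a b c d = cT (mat2 a b c d)" by (simp add: cten_def cT_def)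

lemmas evsimps = mcx_def sapp_def sum_idx Sbit_def KXb_def nxb_def bb_def mat2_def Gm_def all_idx

lemma G_Gm: "\<forall>mu a b. G mu a b = G mu b a \<Longrightarrow> G = Gm (G E E E) (G E E X) (G E X X) (G X E E) (G X E X) (G X X X)"
proof (intro ext)
  assume sym: "\<forall>mu a b. G mu a b = G mu b a"
  fix mu a b show "G mu a b = Gm (G E E E) (G E E X) (G E X X) (G X E E) (G X E X) (G X X X) mu a b"
    unfolding Gm_def mat2_def by (cases mu; cases a; cases b) (simp_all add: sym[rule_format, of _ X E])
qed

definition okb :: "bit \<Rightarrow> bit \<Rightarrow> (idx \<Rightarrow> idx \<Rightarrow> bit) \<Rightarrow> (idx \<Rightarrow> idx \<Rightarrow> idx \<Rightarrow> bit) \<Rightarrow> bool" where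
  "okb p q g G \<longleftrightarrow> (\<forall>i j a b. sapp (Sbit p q G) (KXb p q (bb i j)) a b = KXb p q (Sbit p q G i j) a b)
     \<and> (\<forall>i j a b. sapp (Sbit p q G) (Sbit p q G i j) a b = bb i j a b)
     \<and> (\<forall>a b c. mcx g G (Sbit p q G) a b c = 0)"

lemma case_fwd:
  assumes "\<forall>b1 b2 b3 b4 b5 b6. (\<forall>a b c. mcx g (Gm b1 b2 b3 b4 b5 b6) (Sbit p q (Gm b1 b2 b3 b4 b5 b6)) a b c = 0) \<longrightarrow>
     (cT (mat2 b1 b2 b2 b3), cT (mat2 b4 b5 b5 b6)) \<in> L"
  shows "\<forall>nab s. QLC (Valg p q) g nab s \<and> const_coeff nab \<longrightarrow> (nab (dxb E), nab (dxb X)) \<in> L"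
proof (intro allI impI, elim conjE)
  fix nab s assume Q: "QLC (Valg p q) g nab s" and cc: "const_coeff nab"
  obtain G where n: "nab (dxb E) = cT (G E)" "nab (dxb X) = cT (G X)"
    and sym: "\<forall>mu a b. G mu a b = G mu b a" and mc: "\<forall>a b c. mcx g G (Sbit p q G) a b c = 0"
    using fwd[OF Q cc] by blast
  have G: "G = Gm (G E E E) (G E E X) (G E X X) (G X E E) (G X E X) (G X X X)" by (rule G_Gm[OF sym])
  have "G E = mat2 (G E E E) (G E E X) (G E E X) (G E X X)" "G X = mat2 (G X E E) (G X E X) (G X E X) (G X X X)"
    by (subst G, simp add: Gm_def)+
  then show "(nab (dxb E), nab (dxb X)) \<in> L"
    using assms[rule_format, of "G E E E" "G E E X" "G E X X" "G X E E" "G X E X" "G X X X"] mc G n by metis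
qed

lemma case_bwd:
  assumes "\<forall>x\<in>L. \<exists>b1 b2 b3 b4 b5 b6. x = (cT (mat2 b1 b2 b2 b3), cT (mat2 b4 b5 b5 b6)) \<and> okb p q g (Gm b1 b2 b3 b4 b5 b6)"
  shows "\<forall>(nE, nX)\<in>L. \<exists>nab s. QLC (Valg p q) g nab s \<and> const_coeff nab \<and> nab (dxb E) = nE \<and> nab (dxb X) = nX"
proof (intro ballI, clarify)
  fix nE nX assume "(nE, nX) \<in> L"
  then obtain b1 b2 b3 b4 b5 b6 where e: "nE = cT (mat2 b1 b2 b2 b3)" "nX = cT (mat2 b4 b5 b5 b6)"
    and ok: "okb p q g (Gm b1 b2 b3 b4 b5 b6)" using assms by blast
  let ?G = "Gm b1 b2 b3 b4 b5 b6"
  have "\<exists>nab s. QLC (Valg p q) g nab s \<and> const_coeff nab \<and> nab (dxb E) = cT (?G E) \<and> nab (dxb X) = cT (?G X)"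
  proof (rule bwd)
    show "\<And>mu a b. ?G mu a b = ?G mu b a" by (simp add: Gm_def mat2_def split: idx.split)
    show "\<And>i j. sapp (Sbit p q ?G) (KXb p q (bb i j)) = KXb p q (Sbit p q ?G i j)"
      using ok by (simp add: okb_def fun_eq_iff)
    show "\<And>i j. sapp (Sbit p q ?G) (Sbit p q ?G i j) = bb i j"
      using ok by (simp add: okb_def fun_eq_iff)
    show "\<And>a b c. mcx g ?G (Sbit p q ?G) a b c = 0"
      using ok by (simp add: okb_def)
  qed
  then show "\<exists>nab s. QLC (Valg p q) g nab s \<and> const_coeff nab \<and> nab (dxb E) = nE \<and> nab (dxb X) = nX"
    by (simp add: e Gm_def)
qed

lemma case_alpha: "\<forall>nab s. QLC (Valg p q) g nab s \<and> const_coeff nab \<longrightarrow>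
              (\<forall>w. nab w = sub2 (tens (Valg p q) (dxb E) w) (s (tens (Valg p q) w (dxb E))))"
  by (auto simp: QLC_def conn_eq_Fs[of p q] Fs_def)

lemmas connsimps = conn0_def connA1_def connA2_def connA3_def connA4_def connA5_def connB_def connCI_def connCII_def connCIII_def
  cten_cT cT_eq_iff mat2_eq_iff

lemma fwd_AI: "\<forall>b1 b2 b3 b4 b5 b6. (\<forall>a b c. mcx gAI (Gm b1 b2 b3 b4 b5 b6) (Sbit 0 0 (Gm b1 b2 b3 b4 b5 b6)) a b c = 0) \<longrightarrow>
   (cT (mat2 b1 b2 b2 b3), cT (mat2 b4 b5 b5 b6)) \<in> {conn0, connA1, connA2, connA3, connA4, connA5}"
  apply (intro allI)
  apply (case_tac b1; case_tac b2; case_tac b3; case_tac b4; case_tac b5; case_tac b6)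
  apply (simp_all add: evsimps gAI_def connsimps)
  done

lemma bwd_AI: "\<forall>x\<in>{conn0, connA1, connA2, connA3, connA4, connA5}. \<exists>b1 b2 b3 b4 b5 b6. x = (cT (mat2 b1 b2 b2 b3), cT (mat2 b4 b5 b5 b6)) \<and> okb 0 0 gAI (Gm b1 b2 b3 b4 b5 b6)"
  by (simp add: connsimps okb_def evsimps gAI_def)

lemma central_iff: "(\<forall>rho. smul2 (Var rho) (metric_tensor g) = rmul2 (Valg p q) (Var rho) (metric_tensor g))
   \<longleftrightarrow> (\<forall>a b. KXb p q g a b = 0)"
proof -
  have m: "metric_tensor g = cT g" by (simp add: metric_tensor_def cT_def)
  show ?thesis
    unfolding m all_idx rmul2_VarE rmul2_VarX KX2_cT
    by (simp add: fun_eq_iff add2_def cT_def Const_eq_0 all_idx)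
qed

lemma inv_iff: "invertible2 g \<longleftrightarrow> g E E * g X X + g E X * g X E = 1"
proof
  assume "invertible2 g"
  then obtain h where h: "\<forall>i j. (\<Sum>k\<in>UNIV. g i k * h k j) = (if i = j then 1 else 0)"
    unfolding invertible2_def by blast
  then have e: "g E E * h E E + g E X * h X E = 1" "g E E * h E X + g E X * h X X = 0"
     "g X E * h E E + g X X * h X E = 0" "g X E * h E X + g X X * h X X = 1"
    by (simp_all add: sum_idx all_idx)
  then show "g E E * g X X + g E X * g X E = 1"
    by (cases "g E E"; cases "g E X"; cases "g X E"; cases "g X X"; cases "h E E"; cases "h E X"; cases "h X E"; cases "h X X") simp_all
next
  assume d: "g E E * g X X + g E X * g X E = 1"
  let ?h = "mat2 (g X X) (g E X) (g X E) (g E E)"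
  have "(\<forall>i j. (\<Sum>k\<in>UNIV. g i k * ?h k j) = (if i = j then 1 else 0)) \<and> (\<forall>i j. (\<Sum>k\<in>UNIV. ?h i k * g k j) = (if i = j then 1 else 0))"
    using d by (cases "g E E"; cases "g E X"; cases "g X E"; cases "g X X") (simp_all add: sum_idx all_idx mat2_def)
  then show "invertible2 g" unfolding invertible2_def by blast
qed

lemma qm_iff: "quantum_metric (Valg p q) g \<longleftrightarrow> (\<forall>i j. g i j = g j i) \<and> g E E * g X X + g E X * g X E = 1 \<and> (\<forall>a b. KXb p q g a b = 0)"
  by (simp add: quantum_metric_def central_iff inv_iff)

lemma g_mat2: "g = mat2 (g E E) (g E X) (g X E) (g X X)"
  by (intro ext, case_tac x; case_tac xa) (simp_all add: mat2_def)

lemma metric_set: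
  assumes "\<And>a b c d. quantum_metric V (mat2 a b c d) \<longleftrightarrow> mat2 a b c d \<in> S"
  shows "{g. quantum_metric V g} = S"
proof (rule set_eqI)
  fix g show "g \<in> {g. quantum_metric V g} \<longleftrightarrow> g \<in> S"
    using assms[of "g E E" "g E X" "g X E" "g X X"] g_mat2[of g] by simp
qed

lemma QM_A: "{g. quantum_metric VA g} = {gAI, gAII}"
proof (rule metric_set)
  fix a b c d :: bit
  show "quantum_metric VA (mat2 a b c d) \<longleftrightarrow> mat2 a b c d \<in> {gAI, gAII}"
    unfolding VA_def qm_iff gAI_def gAII_def insert_iff empty_iff mat2_eq_iff
    by (cases a; cases b; cases c; cases d) (simp_all add: all_idx KXb_def mat2_def)
qed

lemma QM_B: "{g. quantum_metric VB g} = {gB}"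
proof (rule metric_set)
  fix a b c d :: bit
  show "quantum_metric VB (mat2 a b c d) \<longleftrightarrow> mat2 a b c d \<in> {gB}"
    unfolding VB_def qm_iff gB_def insert_iff empty_iff mat2_eq_iff
    by (cases a; cases b; cases c; cases d) (simp_all add: all_idx KXb_def mat2_def)
qed

lemma QM_C: "{g. quantum_metric VC g} = {gCI, gCII, gCIII}"
proof (rule metric_set)
  fix a b c d :: bit
  show "quantum_metric VC (mat2 a b c d) \<longleftrightarrow> mat2 a b c d \<in> {gCI, gCII, gCIII}"
    unfolding VC_def qm_iff gCI_def gCII_def gCIII_def insert_iff empty_iff mat2_eq_iff
    by (cases a; cases b; cases c; cases d) (simp_all add: all_idx KXb_def mat2_def)
qed

lemma fwd_AII: "\<forall>b1 b2 b3 b4 b5 b6. (\<forall>a b c. mcx gAII (Gm b1 b2 b3 b4 b5 b6) (Sbit 0 0 (Gm b1 b2 b3 b4 b5 b6)) a b c = 0) \<longrightarrow>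
   (cT (mat2 b1 b2 b2 b3), cT (mat2 b4 b5 b5 b6)) \<in> {conn0, connA1, connA2, connA3}"
  apply (intro allI)
  apply (case_tac b1; case_tac b2; case_tac b3; case_tac b4; case_tac b5; case_tac b6)
  apply (simp_all add: evsimps gAII_def connsimps)
  done

lemma bwd_AII: "\<forall>x\<in>{conn0, connA1, connA2, connA3}. \<exists>b1 b2 b3 b4 b5 b6. x = (cT (mat2 b1 b2 b2 b3), cT (mat2 b4 b5 b5 b6)) \<and> okb 0 0 gAII (Gm b1 b2 b3 b4 b5 b6)"
  by (simp add: connsimps okb_def evsimps gAII_def)

lemma fwd_B: "\<forall>b1 b2 b3 b4 b5 b6. (\<forall>a b c. mcx gB (Gm b1 b2 b3 b4 b5 b6) (Sbit 0 1 (Gm b1 b2 b3 b4 b5 b6)) a b c = 0) \<longrightarrow>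
   (cT (mat2 b1 b2 b2 b3), cT (mat2 b4 b5 b5 b6)) \<in> {conn0, connB}"
  apply (intro allI)
  apply (case_tac b1; case_tac b2; case_tac b3; case_tac b4; case_tac b5; case_tac b6)
  apply (simp_all add: evsimps gB_def connsimps)
  done

lemma bwd_B: "\<forall>x\<in>{conn0, connB}. \<exists>b1 b2 b3 b4 b5 b6. x = (cT (mat2 b1 b2 b2 b3), cT (mat2 b4 b5 b5 b6)) \<and> okb 0 1 gB (Gm b1 b2 b3 b4 b5 b6)"
  by (simp add: connsimps okb_def evsimps gB_def)

lemma fwd_CI: "\<forall>b1 b2 b3 b4 b5 b6. (\<forall>a b c. mcx gCI (Gm b1 b2 b3 b4 b5 b6) (Sbit 1 1 (Gm b1 b2 b3 b4 b5 b6)) a b c = 0) \<longrightarrow>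
   (cT (mat2 b1 b2 b2 b3), cT (mat2 b4 b5 b5 b6)) \<in> {conn0, connCI}"
  apply (intro allI)
  apply (case_tac b1; case_tac b2; case_tac b3; case_tac b4; case_tac b5; case_tac b6)
  apply (simp_all add: evsimps gCI_def connsimps)
  done

lemma bwd_CI: "\<forall>x\<in>{conn0, connCI}. \<exists>b1 b2 b3 b4 b5 b6. x = (cT (mat2 b1 b2 b2 b3), cT (mat2 b4 b5 b5 b6)) \<and> okb 1 1 gCI (Gm b1 b2 b3 b4 b5 b6)"
  by (simp add: connsimps okb_def evsimps gCI_def)

lemma fwd_CII: "\<forall>b1 b2 b3 b4 b5 b6. (\<forall>a b c. mcx gCII (Gm b1 b2 b3 b4 b5 b6) (Sbit 1 1 (Gm b1 b2 b3 b4 b5 b6)) a b c = 0) \<longrightarrow>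
   (cT (mat2 b1 b2 b2 b3), cT (mat2 b4 b5 b5 b6)) \<in> {conn0, connCII}"
  apply (intro allI)
  apply (case_tac b1; case_tac b2; case_tac b3; case_tac b4; case_tac b5; case_tac b6)
  apply (simp_all add: evsimps gCII_def connsimps)
  done

lemma bwd_CII: "\<forall>x\<in>{conn0, connCII}. \<exists>b1 b2 b3 b4 b5 b6. x = (cT (mat2 b1 b2 b2 b3), cT (mat2 b4 b5 b5 b6)) \<and> okb 1 1 gCII (Gm b1 b2 b3 b4 b5 b6)"
  by (simp add: connsimps okb_def evsimps gCII_def)

lemma fwd_CIII: "\<forall>b1 b2 b3 b4 b5 b6. (\<forall>a b c. mcx gCIII (Gm b1 b2 b3 b4 b5 b6) (Sbit 1 1 (Gm b1 b2 b3 b4 b5 b6)) a b c = 0) \<longrightarrow>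
   (cT (mat2 b1 b2 b2 b3), cT (mat2 b4 b5 b5 b6)) \<in> {conn0, connCIII}"
  apply (intro allI)
  apply (case_tac b1; case_tac b2; case_tac b3; case_tac b4; case_tac b5; case_tac b6)
  apply (simp_all add: evsimps gCIII_def connsimps)
  done

lemma bwd_CIII: "\<forall>x\<in>{conn0, connCIII}. \<exists>b1 b2 b3 b4 b5 b6. x = (cT (mat2 b1 b2 b2 b3), cT (mat2 b4 b5 b5 b6)) \<and> okb 1 1 gCIII (Gm b1 b2 b3 b4 b5 b6)"
  by (simp add: connsimps okb_def evsimps gCIII_def)

lemma case_all:
  assumes f: "\<forall>b1 b2 b3 b4 b5 b6. (\<forall>a b c. mcx g (Gm b1 b2 b3 b4 b5 b6) (Sbit p q (Gm b1 b2 b3 b4 b5 b6)) a b c = 0) \<longrightarrow>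
     (cT (mat2 b1 b2 b2 b3), cT (mat2 b4 b5 b5 b6)) \<in> L"
    and b: "\<forall>x\<in>L. \<exists>b1 b2 b3 b4 b5 b6. x = (cT (mat2 b1 b2 b2 b3), cT (mat2 b4 b5 b5 b6)) \<and> okb p q g (Gm b1 b2 b3 b4 b5 b6)"
  shows "(\<lambda>(V, g, L). (\<forall>nab s. QLC V g nab s \<and> const_coeff nab \<longrightarrow> (nab (dxb E), nab (dxb X)) \<in> L)
        \<and> (\<forall>(nE, nX) \<in> L. \<exists>nab s. QLC V g nab s \<and> const_coeff nab
              \<and> nab (dxb E) = nE \<and> nab (dxb X) = nX)
        \<and> (\<forall>nab s. QLC V g nab s \<and> const_coeff nab \<longrightarrow>
              (\<forall>w. nab w = sub2 (tens V (dxb E) w) (s (tens V w (dxb E)))))) (Valg p q, g, L)"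
  using case_fwd[OF f] case_bwd[OF b] case_alpha[of p q g] by simp

lemma zero_all:
  "(\<lambda>(V, g, L). \<forall>nab s. QLC V g nab s
          \<and> nab (dxb E) = zero2 \<and> nab (dxb X) = zero2 \<longrightarrow>
          (\<forall>mu nu. s (basis2 mu nu) = basis2 nu mu)) (Valg p q, g, L)"
  by (auto simp: QLC_def intro: zero_case)

lemma ball_insertI: "P a \<Longrightarrow> \<forall>x\<in>B. P x \<Longrightarrow> \<forall>x\<in>insert a B. P x" by auto
lemma ball_emptyI: "\<forall>x\<in>{}. P x" by auto

theorem mainTheorem4:
  shows "{g. quantum_metric VA g} = {gAI, gAII}
    \<and> {g. quantum_metric VB g} = {gB}
    \<and> {g. quantum_metric VC g} = {gCI, gCII, gCIII}
    \<and> (\<forall>(V, g, L) \<in> cases4.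
          (\<forall>nab s. QLC V g nab s \<and> const_coeff nab \<longrightarrow> (nab (dxb E), nab (dxb X)) \<in> L)
        \<and> (\<forall>(nE, nX) \<in> L. \<exists>nab s. QLC V g nab s \<and> const_coeff nab
              \<and> nab (dxb E) = nE \<and> nab (dxb X) = nX)
        \<and> (\<forall>nab s. QLC V g nab s \<and> const_coeff nab \<longrightarrow>
              (\<forall>w. nab w = sub2 (tens V (dxb E) w) (s (tens V w (dxb E))))))
    \<and> (\<forall>(V, g, L) \<in> cases4. \<forall>nab s. QLC V g nab s
          \<and> nab (dxb E) = zero2 \<and> nab (dxb X) = zero2 \<longrightarrow>
          (\<forall>mu nu. s (basis2 mu nu) = basis2 nu mu))"
proof (intro conjI)
  show "{g. quantum_metric VA g} = {gAI, gAII}" by (rule QM_A)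
  show "{g. quantum_metric VB g} = {gB}" by (rule QM_B)
  show "{g. quantum_metric VC g} = {gCI, gCII, gCIII}" by (rule QM_C)
next
  show "\<forall>(V, g, L) \<in> cases4.
          (\<forall>nab s. QLC V g nab s \<and> const_coeff nab \<longrightarrow> (nab (dxb E), nab (dxb X)) \<in> L)
        \<and> (\<forall>(nE, nX) \<in> L. \<exists>nab s. QLC V g nab s \<and> const_coeff nab
              \<and> nab (dxb E) = nE \<and> nab (dxb X) = nX)
        \<and> (\<forall>nab s. QLC V g nab s \<and> const_coeff nab \<longrightarrow>
              (\<forall>w. nab w = sub2 (tens V (dxb E) w) (s (tens V w (dxb E)))))"
    unfolding cases4_def VA_def VB_def VC_def
    by (intro ball_insertI ball_emptyI case_all fwd_AI bwd_AI fwd_AII bwd_AII fwd_B bwd_B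
          fwd_CI bwd_CI fwd_CII bwd_CII fwd_CIII bwd_CIII)
next
  show "\<forall>(V, g, L) \<in> cases4. \<forall>nab s. QLC V g nab s
          \<and> nab (dxb E) = zero2 \<and> nab (dxb X) = zero2 \<longrightarrow>
          (\<forall>mu nu. s (basis2 mu nu) = basis2 nu mu)"
    unfolding cases4_def VA_def VB_def VC_def
    by (intro ball_insertI ball_emptyI zero_all)
qed

end
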